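(* Let $\Omega\subset\mathbb{R}^d$ be open and connected, $m\ge1$, $p\colon\Omega\to[1,2]$ measurable, $X=L^2(\Omega,\mathbb{R}^m)$, $\rho_p(f)=\int_\Omega|f(x)|^{p(x)}\,dx$, and $\tau>0$. Then for every $f\in X$ and almost every $x\in\Omega$, $$\operatorname{prox}_{\tau\rho_p^*}(f)(x)=V_\tau\big(f(x),p(x)\big)\,\frac{f(x)}{|f(x)|},$$ with the convention that the value is $0$ if $f(x)=0$, where $$V_\tau(z,q)=\begin{cases}\min\{|z|,1\}, & q=1,\\ \frac{2|z|}{\tau+2}, & q=2,\\ |z|-\bar\alpha(|z|,q,\tau^{1-q}), & 1<q<2,\end{cases}$$ and, for $a>0$ and $s>0$, $\bar\alpha(a,q,s)$ denotes the unique solution $\alpha\in(0,a)$ of $\alpha+s\,q\,\alpha^{q-1}=a$. *)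

theory Defs
  imports "HOL-Analysis.Analysis"
begin

definition L2 :: "('a::euclidean_space) set \<Rightarrow> ('a \<Rightarrow> 'b::euclidean_space) set" where
  "L2 \<Omega> = {f. f \<in> borel_measurable (lebesgue_on \<Omega>) \<and>
                 integrable (lebesgue_on \<Omega>) (\<lambda>x. (norm (f x))\<^sup>2)}"

definition inner_L2 :: "('a::euclidean_space) set \<Rightarrow> ('a \<Rightarrow> 'b::euclidean_space) \<Rightarrow> ('a \<Rightarrow> 'b) \<Rightarrow> real" where
  "inner_L2 \<Omega> f g = (\<integral>x. f x \<bullet> g x \<partial>lebesgue_on \<Omega>)"

definition normsq_L2 :: "('a::euclidean_space) set \<Rightarrow> ('a \<Rightarrow> 'b::euclidean_space) \<Rightarrow> real" where
  "normsq_L2 \<Omega> f = (\<integral>x. (norm (f x))\<^sup>2 \<partial>lebesgue_on \<Omega>)"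

definition rho :: "('a::euclidean_space) set \<Rightarrow> ('a \<Rightarrow> real) \<Rightarrow> ('a \<Rightarrow> 'b::euclidean_space) \<Rightarrow> ereal" where
  "rho \<Omega> p f = enn2ereal (\<integral>\<^sup>+ x. ennreal (norm (f x) powr p x) \<partial>lebesgue_on \<Omega>)"

definition conj_L2 :: "('a::euclidean_space) set \<Rightarrow> (('a \<Rightarrow> 'b::euclidean_space) \<Rightarrow> ereal)
                        \<Rightarrow> ('a \<Rightarrow> 'b) \<Rightarrow> ereal" where
  "conj_L2 \<Omega> h g = (SUP f \<in> L2 \<Omega>. ereal (inner_L2 \<Omega> g f) - h f)"

definition is_prox :: "('a::euclidean_space) set \<Rightarrow> (('a \<Rightarrow> 'b::euclidean_space) \<Rightarrow> ereal)
                        \<Rightarrow> real \<Rightarrow> ('a \<Rightarrow> 'b) \<Rightarrow> ('a \<Rightarrow> 'b) \<Rightarrow> bool" where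
  "is_prox \<Omega> h \<tau> f u \<longleftrightarrow> u \<in> L2 \<Omega> \<and>
     (\<forall>v \<in> L2 \<Omega>. ereal \<tau> * h u + ereal (normsq_L2 \<Omega> (\<lambda>x. u x - f x) / 2)
                  \<le> ereal \<tau> * h v + ereal (normsq_L2 \<Omega> (\<lambda>x. v x - f x) / 2))"

definition alpha_bar :: "real \<Rightarrow> real \<Rightarrow> real \<Rightarrow> real" where
  "alpha_bar a q s = (THE \<alpha>. 0 < \<alpha> \<and> \<alpha> < a \<and> \<alpha> + s * q * \<alpha> powr (q - 1) = a)"

definition V :: "real \<Rightarrow> 'b::real_normed_vector \<Rightarrow> real \<Rightarrow> real" where
  "V \<tau> z q = (if q = 1 then min (norm z) 1
              else if q = 2 then 2 * norm z / (\<tau> + 2)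
              else norm z - alpha_bar (norm z) q (\<tau> powr (1 - q)))"

end

theory Submission
  imports Defs
begin


lemma norm_scaleR_sgn: "(z::'b::euclidean_space) \<noteq> 0 \<Longrightarrow> norm z *\<^sub>R sgn z = z"
  unfolding sgn_div_norm by simp

lemma tangent_powr:
  fixes q c t :: real
  assumes "1 \<le> q" "0 < c" "0 \<le> t"
  shows "c powr q + q * c powr (q - 1) * (t - c) \<le> t powr q"
proof (cases "t = 0")
  case True
  have "c powr q = c * c powr (q - 1)"
    using assms by (simp add: powr_mult_base)
  then have "c powr q + q * c powr (q - 1) * (t - c) = (1 - q) * c powr q"
    using True by (simp add: algebra_simps)
  also have "\<dots> \<le> 0" using assms by (simp add: mult_nonpos_nonneg)
  finally show ?thesis using True by simp
next
  case False
  have "t powr q - c powr q \<ge> q * c powr (q - 1) * (t - c)"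
    apply (rule convex_on_imp_above_tangent[OF powr_convex[OF assms(1)]])
    using assms False
    by (auto simp: interior_open intro!: has_field_derivative_at_within has_real_derivative_powr)
  then show ?thesis by simp
qed

lemma alpha_bar_props:
  fixes a q s :: real
  assumes "0 < a" "0 < s" "1 < q"
  shows "0 < alpha_bar a q s \<and> alpha_bar a q s < a \<and>
         alpha_bar a q s + s * q * alpha_bar a q s powr (q - 1) = a"
    and "\<And>r. 0 < r \<Longrightarrow> (r < alpha_bar a q s \<longleftrightarrow> r + s * q * r powr (q - 1) < a)"
proof -
  define F where "F = (\<lambda>x::real. x + s * q * x powr (q - 1))"
  have mono: "F x < F y" if "0 \<le> x" "x < y" for x y
  proof -
    have "x powr (q - 1) \<le> y powr (q - 1)" using that assms by (intro powr_mono2) auto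
    then have "s * q * x powr (q - 1) \<le> s * q * y powr (q - 1)"
      using assms by (intro mult_left_mono) auto
    then show ?thesis using that unfolding F_def by simp
  qed
  have F0: "F 0 = 0" unfolding F_def by simp
  have Fa: "a \<le> F a" unfolding F_def using assms by simp
  have cont: "continuous_on {0..a} F" unfolding F_def using assms
    by (intro continuous_intros continuous_on_powr') auto
  obtain x where x: "0 \<le> x" "x \<le> a" "F x = a"
    using IVT'[of F 0 a a, OF _ Fa _ cont] F0 assms by auto
  have x0: "x \<noteq> 0" using x F0 assms by auto
  have xa: "x \<noteq> a"
  proof
    assume "x = a"
    then have "s * q * a powr (q - 1) = 0" using x unfolding F_def by simp
    then show False using assms by simp
  qed
  have uniq: "y = x" if "0 < y" "y < a" "F y = a" for y
    using mono[of x y] mono[of y x] that x by (cases "x < y"; cases "y < x") auto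
  have ab: "alpha_bar a q s = x"
    unfolding alpha_bar_def
    apply (rule the_equality)
    using x x0 xa uniq unfolding F_def by auto
  show "0 < alpha_bar a q s \<and> alpha_bar a q s < a \<and>
         alpha_bar a q s + s * q * alpha_bar a q s powr (q - 1) = a"
    using ab x x0 xa unfolding F_def by auto
  fix r :: real assume r: "0 < r"
  show "r < alpha_bar a q s \<longleftrightarrow> r + s * q * r powr (q - 1) < a"
  proof -
    have Fr: "r + s * q * r powr (q - 1) = F r" by (simp add: F_def)
    have "r < x \<longleftrightarrow> F r < F x"
      using mono[of r x] mono[of x r] r x by (cases "r < x"; cases "x < r") auto
    then show ?thesis using ab x Fr by simp
  qed
qed

lemma scalar_main:
  fixes n \<tau> q t :: real
  assumes "0 < n" "1 \<le> q" "q \<le> 2" "0 < \<tau>" "0 \<le> t"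
    and Vv: "Vv = (if q = 1 then min n 1 else if q = 2 then 2 * n / (\<tau> + 2)
              else n - alpha_bar n q (\<tau> powr (1 - q)))"
  defines "c \<equiv> (n - Vv) / \<tau>"
  shows "0 \<le> Vv" "Vv \<le> n" "Vv * t - t powr q \<le> Vv * c - c powr q"
proof -
  have "(0 \<le> Vv \<and> Vv \<le> n) \<and> Vv * t - t powr q \<le> Vv * c - c powr q"
  proof (cases "q = 1")
    case True
    then show ?thesis using assms unfolding c_def
      by (cases "n \<le> 1") (auto simp: powr_one divide_nonneg_pos mult_left_le_one_le)
  next
    case q1: False
    show ?thesis
    proof (cases "q = 2")
      case True
      then have V2: "Vv = 2 * n / (\<tau> + 2)" using Vv by simp
      have d: "\<tau> + 2 \<noteq> 0" using assms by simp
      have "n - 2 * n / (\<tau> + 2) = \<tau> * n / (\<tau> + 2)" using d by (simp add: field_simps)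
      then have cc: "c = n / (\<tau> + 2)" unfolding c_def V2 using assms by simp
      have "Vv = 2 * c" using V2 cc by simp
      moreover have "c \<ge> 0" using cc assms by simp
      moreover have "0 \<le> (t - c)^2" by simp
      ultimately have "Vv * t - t^2 \<le> Vv * c - c^2" by (simp add: power2_eq_square algebra_simps)
      moreover have "Vv \<le> n"
      proof -
        have "2 * n \<le> n * (\<tau> + 2)" using mult_pos_pos[OF \<open>0<n\<close> \<open>0<\<tau>\<close>]
          by (simp add: algebra_simps)
        then show ?thesis using V2 \<open>0<\<tau>\<close> by (simp add: pos_divide_le_eq)
      qed
      ultimately show ?thesis using True \<open>0 \<le> t\<close> \<open>c \<ge> 0\<close> \<open>Vv = 2*c\<close> by simp
    next
      case q2: False
      have q12: "1 < q" "q < 2" using q1 q2 assms by auto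
      define s where "s = \<tau> powr (1 - q)"
      have s0: "0 < s" using assms unfolding s_def by simp
      define \<alpha> where "\<alpha> = alpha_bar n q s"
      have A: "0 < \<alpha>" "\<alpha> < n" "\<alpha> + s * q * \<alpha> powr (q - 1) = n"
        using alpha_bar_props(1)[OF assms(1) s0 q12(1)] unfolding \<alpha>_def by auto
      have Vva: "Vv = n - \<alpha>" using Vv q1 q2 unfolding \<alpha>_def s_def by simp
      have cc: "c = \<alpha> / \<tau>" unfolding c_def Vva by simp
      have "s * \<alpha> powr (q - 1) = (\<alpha> / \<tau>) powr (q - 1)"
      proof -
        have "s = inverse (\<tau> powr (q - 1))" unfolding s_def
          using powr_minus[of \<tau> "q - 1"] by simp
        then show ?thesis by (simp add: powr_divide field_simps)
      qed
      then have Vc: "Vv = q * c powr (q - 1)" using A Vva cc by (simp add: algebra_simps)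
      have c0: "0 < c" using cc A assms by simp
      have "c powr q + q * c powr (q - 1) * (t - c) \<le> t powr q"
        by (rule tangent_powr) (use assms c0 in auto)
      then have "Vv * t - t powr q \<le> Vv * c - c powr q"
        unfolding Vc by (simp add: algebra_simps)
      then show ?thesis using Vva A by simp
    qed
  qed
  then show "0 \<le> Vv" "Vv \<le> n" "Vv * t - t powr q \<le> Vv * c - c powr q" by auto
qed

lemma pointwise:
  fixes z h :: "'b::euclidean_space"
  assumes "1 \<le> q" "q \<le> 2" "0 < \<tau>"
  defines "w \<equiv> V \<tau> z q *\<^sub>R sgn z"
  defines "y \<equiv> (1/\<tau>) *\<^sub>R (z - w)"
  shows "norm w \<le> norm z" "w \<bullet> h - norm h powr q \<le> w \<bullet> y - norm y powr q"
proof -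
  have "norm w \<le> norm z \<and> w \<bullet> h - norm h powr q \<le> w \<bullet> y - norm y powr q"
  proof (cases "z = 0")
    case True
    then show ?thesis unfolding w_def y_def by simp
  next
    case False
    define n where "n = norm z"
    have n0: "0 < n" using False n_def by simp
    define Vv where "Vv = V \<tau> z q"
    define c where "c = (n - Vv) / \<tau>"
    have Vdef: "Vv = (if q = 1 then min n 1 else if q = 2 then 2 * n / (\<tau> + 2)
              else n - alpha_bar n q (\<tau> powr (1 - q)))"
      unfolding Vv_def V_def n_def by simp
    note S = scalar_main[OF n0 assms(1-3) _ Vdef, of "norm h"]
    have c0: "0 \<le> c" using S(2) assms unfolding c_def by simp
    define e where "e = sgn z"
    have ne: "norm e = 1" using False e_def by (simp add: norm_sgn)
    have ze: "z = n *\<^sub>R e" by (simp only: n_def e_def norm_scaleR_sgn[OF False])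
    have we: "w = Vv *\<^sub>R e" unfolding w_def Vv_def e_def by simp
    have zw: "z - w = (n - Vv) *\<^sub>R e"
      using ze we by (simp add: scaleR_diff_left)
    have ye: "y = c *\<^sub>R e" unfolding y_def zw c_def by simp
    have ee: "e \<bullet> e = 1" using ne by (simp add: norm_eq_sqrt_inner)
    have "w \<bullet> h \<le> norm w * norm h" by (rule norm_cauchy_schwarz)
    also have "norm w = Vv" using we ne S(1) by simp
    finally have wh: "w \<bullet> h \<le> Vv * norm h" .
    have wy: "w \<bullet> y = Vv * c" using we ye ee by simp
    have ny: "norm y = c" using ye ne c0 by simp
    show ?thesis using S wh wy ny \<open>norm w = Vv\<close> n_def c_def by simp
  qed
  then show "norm w \<le> norm z" "w \<bullet> h - norm h powr q \<le> w \<bullet> y - norm y powr q" by auto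
qed



lemma L2_meas: "f \<in> L2 \<Omega> \<Longrightarrow> f \<in> borel_measurable (lebesgue_on \<Omega>)"
  and L2_int: "f \<in> L2 \<Omega> \<Longrightarrow> integrable (lebesgue_on \<Omega>) (\<lambda>x. (norm (f x))\<^sup>2)"
  unfolding L2_def by auto

lemma L2_bound:
  fixes f :: "'a::euclidean_space \<Rightarrow> 'b::euclidean_space" and g :: "'a \<Rightarrow> 'c::euclidean_space"
  assumes "f \<in> L2 \<Omega>" "g \<in> borel_measurable (lebesgue_on \<Omega>)"
    "\<And>x. x \<in> \<Omega> \<Longrightarrow> norm (g x) \<le> norm (f x)"
  shows "g \<in> L2 \<Omega>"
  unfolding L2_def
proof (intro CollectI conjI assms(2))
  show "integrable (lebesgue_on \<Omega>) (\<lambda>x. (norm (g x))\<^sup>2)"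
    apply (rule Bochner_Integration.integrable_bound[OF L2_int[OF assms(1)]])
    using assms(2) apply measurable
    apply (rule AE_I2)
    using assms(3) by (auto intro!: power_mono)
qed

lemma L2_inner_int:
  fixes f g :: "'a::euclidean_space \<Rightarrow> 'b::euclidean_space"
  assumes "f \<in> L2 \<Omega>" "g \<in> L2 \<Omega>"
  shows "integrable (lebesgue_on \<Omega>) (\<lambda>x. f x \<bullet> g x)"
proof -
  have m: "f \<in> borel_measurable (lebesgue_on \<Omega>)" "g \<in> borel_measurable (lebesgue_on \<Omega>)"
    using assms L2_meas by auto
  have i: "integrable (lebesgue_on \<Omega>) (\<lambda>x. (norm (f x))\<^sup>2 + (norm (g x))\<^sup>2)"
    using L2_int[OF assms(1)] L2_int[OF assms(2)] by auto
  show ?thesis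
  proof (rule Bochner_Integration.integrable_bound[OF i])
    show "(\<lambda>x. f x \<bullet> g x) \<in> borel_measurable (lebesgue_on \<Omega>)" using m by measurable
    show "AE x in lebesgue_on \<Omega>. norm (f x \<bullet> g x) \<le> norm ((norm (f x))\<^sup>2 + (norm (g x))\<^sup>2)"
    proof (rule AE_I2)
      fix x
      have "\<bar>f x \<bullet> g x\<bar> \<le> norm (f x) * norm (g x)" by (rule Cauchy_Schwarz_ineq2)
      also have "\<dots> \<le> (norm (f x))\<^sup>2 + (norm (g x))\<^sup>2"
        using sum_squares_bound[of "norm (f x)" "norm (g x)"] mult_nonneg_nonneg[OF norm_ge_zero norm_ge_zero, of "f x" "g x"]
        by linarith
      finally show "norm (f x \<bullet> g x) \<le> norm ((norm (f x))\<^sup>2 + (norm (g x))\<^sup>2)" by simp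
    qed
  qed
qed

lemma L2_diff:
  fixes f g :: "'a::euclidean_space \<Rightarrow> 'b::euclidean_space"
  assumes "f \<in> L2 \<Omega>" "g \<in> L2 \<Omega>"
  shows "(\<lambda>x. f x - g x) \<in> L2 \<Omega>"
proof -
  have m: "f \<in> borel_measurable (lebesgue_on \<Omega>)" "g \<in> borel_measurable (lebesgue_on \<Omega>)"
    using assms L2_meas by auto
  have "(norm (f x - g x))\<^sup>2 = (norm (f x))\<^sup>2 + (norm (g x))\<^sup>2 - 2 * (f x \<bullet> g x)" for x
    by (simp add: power2_norm_eq_inner inner_diff_left inner_diff_right inner_commute)
  moreover have "integrable (lebesgue_on \<Omega>) (\<lambda>x. (norm (f x))\<^sup>2 + (norm (g x))\<^sup>2 - 2 * (f x \<bullet> g x))"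
    using L2_int[OF assms(1)] L2_int[OF assms(2)] L2_inner_int[OF assms] by auto
  ultimately show ?thesis unfolding L2_def using m by (auto)
qed

lemma L2_scale:
  fixes f :: "'a::euclidean_space \<Rightarrow> 'b::euclidean_space"
  assumes "f \<in> L2 \<Omega>"
  shows "(\<lambda>x. c *\<^sub>R f x) \<in> L2 \<Omega>"
proof -
  have "(norm (c *\<^sub>R f x))\<^sup>2 = c\<^sup>2 * (norm (f x))\<^sup>2" for x
    by (simp add: power_mult_distrib)
  then show ?thesis using assms unfolding L2_def by auto
qed



lemma pw_identity:
  fixes v u f :: "'b::euclidean_space"
  assumes "\<tau> \<noteq> 0"
  shows "\<tau> * (v \<bullet> ((1/\<tau>) *\<^sub>R (f - u))) - \<tau> * (u \<bullet> ((1/\<tau>) *\<^sub>R (f - u)))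
     + (norm (v - f))\<^sup>2 / 2 - (norm (u - f))\<^sup>2 / 2 = (norm (v - u))\<^sup>2 / 2"
  using assms
  by (simp add: power2_norm_eq_inner inner_diff_left inner_diff_right inner_commute algebra_simps)
    (simp add: field_simps)

theorem mainTheorem6:
  fixes \<Omega> :: "(real^'d) set" and p :: "real^'d \<Rightarrow> real" and \<tau> :: real
    and f :: "real^'d \<Rightarrow> real^'m"
  assumes "open \<Omega>" and "connected \<Omega>"
    and "p \<in> borel_measurable (lebesgue_on \<Omega>)"
    and "\<forall>x\<in>\<Omega>. 1 \<le> p x \<and> p x \<le> 2"
    and "\<tau> > 0"
    and "f \<in> L2 \<Omega>"
  shows "(\<lambda>x. V \<tau> (f x) (p x) *\<^sub>R sgn (f x)) \<in> L2 \<Omega> \<and>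
         (\<forall>u. is_prox \<Omega> (conj_L2 \<Omega> (rho \<Omega> p)) \<tau> f u \<longleftrightarrow>
              u \<in> L2 \<Omega> \<and> (AE x in lebesgue_on \<Omega>. u x = V \<tau> (f x) (p x) *\<^sub>R sgn (f x)))"
proof -
  define u0 where "u0 = (\<lambda>x. V \<tau> (f x) (p x) *\<^sub>R sgn (f x))"
  define g0 where "g0 = (\<lambda>x. (1/\<tau>) *\<^sub>R (f x - u0 x))"
  have fm[measurable]: "f \<in> borel_measurable (lebesgue_on \<Omega>)" using L2_meas assms(6) .
  have pm[measurable]: "p \<in> borel_measurable (lebesgue_on \<Omega>)" using assms(3) .
  define C where "C = (\<lambda>x. 1 < p x \<and> p x < 2 \<and> 0 < norm (f x))"
  define A where "A = (\<lambda>x. if C x then alpha_bar (norm (f x)) (p x) (\<tau> powr (1 - p x)) else 0)"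
  have Am[measurable]: "A \<in> borel_measurable (lebesgue_on \<Omega>)"
    unfolding borel_measurable_iff_greater
  proof
    fix r :: real
    have "{x\<in>space (lebesgue_on \<Omega>). r < A x} = {x\<in>space (lebesgue_on \<Omega>).
        (C x \<and> (r \<le> 0 \<or> r + \<tau> powr (1 - p x) * p x * r powr (p x - 1) < norm (f x))) \<or> (\<not> C x \<and> r < 0)}"
    proof (rule Collect_cong)
      fix x
      show "(x \<in> space (lebesgue_on \<Omega>) \<and> r < A x) = (x \<in> space (lebesgue_on \<Omega>) \<and>
        ((C x \<and> (r \<le> 0 \<or> r + \<tau> powr (1 - p x) * p x * r powr (p x - 1) < norm (f x))) \<or> (\<not> C x \<and> r < 0)))"
      proof (cases "C x")
        case True
        have c: "0 < norm (f x)" "0 < \<tau> powr (1 - p x)" "1 < p x" using True assms(5) unfolding C_def by auto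
        note P = alpha_bar_props[OF c]
        show ?thesis
        proof (cases "r \<le> 0")
          case True
          then show ?thesis using P(1) \<open>C x\<close> unfolding A_def by auto
        next
          case False
          then show ?thesis using P(2)[of r] \<open>C x\<close> unfolding A_def by auto
        qed
      next
        case False
        then show ?thesis unfolding A_def by auto
      qed
    qed
    also have "\<dots> \<in> sets (lebesgue_on \<Omega>)" unfolding C_def by measurable
    finally show "{x\<in>space (lebesgue_on \<Omega>). r < A x} \<in> sets (lebesgue_on \<Omega>)" .
  qed
  have u0m[measurable]: "u0 \<in> borel_measurable (lebesgue_on \<Omega>)"
  proof -
    have "(\<lambda>x. (if p x = 1 then min (norm (f x)) 1 else if p x = 2 then 2 * norm (f x) / (\<tau> + 2)
       else norm (f x) - A x) *\<^sub>R (f x /\<^sub>R norm (f x))) \<in> borel_measurable (lebesgue_on \<Omega>)"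
      by measurable
    moreover have "u0 x = (if p x = 1 then min (norm (f x)) 1 else if p x = 2 then 2 * norm (f x) / (\<tau> + 2)
       else norm (f x) - A x) *\<^sub>R (f x /\<^sub>R norm (f x))" if "x \<in> space (lebesgue_on \<Omega>)" for x
    proof (cases "f x = 0")
      case True
      then show ?thesis unfolding u0_def by simp
    next
      case False
      have "C x \<or> p x = 1 \<or> p x = 2" using that assms(4) False unfolding C_def by auto
      then show ?thesis unfolding u0_def V_def A_def sgn_div_norm by auto
    qed
    ultimately show ?thesis using measurable_cong by (smt (verit))
  qed
  have PW: "norm (u0 x) \<le> norm (f x)" "u0 x \<bullet> h - norm h powr p x \<le> u0 x \<bullet> g0 x - norm (g0 x) powr p x"
    if "x \<in> \<Omega>" for x h
    using pointwise(1)[where q="p x" and \<tau>=\<tau> and z="f x"]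
      pointwise(2)[where q="p x" and \<tau>=\<tau> and z="f x" and h=h] that assms(4,5) unfolding u0_def g0_def by auto
  have u0L2: "u0 \<in> L2 \<Omega>" by (rule L2_bound[OF assms(6) u0m PW(1)])
  have g0L2: "g0 \<in> L2 \<Omega>" unfolding g0_def by (intro L2_scale L2_diff assms(6) u0L2)
  have g0m[measurable]: "g0 \<in> borel_measurable (lebesgue_on \<Omega>)" using L2_meas[OF g0L2] .
  have u0g0: "integrable (lebesgue_on \<Omega>) (\<lambda>x. u0 x \<bullet> g0 x)" by (rule L2_inner_int[OF u0L2 g0L2])
  have Rint: "integrable (lebesgue_on \<Omega>) (\<lambda>x. norm (g0 x) powr p x)"
  proof (rule Bochner_Integration.integrable_bound[OF u0g0])
    show "(\<lambda>x. norm (g0 x) powr p x) \<in> borel_measurable (lebesgue_on \<Omega>)" by measurable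
    show "AE x in lebesgue_on \<Omega>. norm (norm (g0 x) powr p x) \<le> norm (u0 x \<bullet> g0 x)"
    proof (rule AE_I2)
      fix x assume "x \<in> space (lebesgue_on \<Omega>)"
      then have "u0 x \<bullet> 0 - norm (0::real^'m) powr p x \<le> u0 x \<bullet> g0 x - norm (g0 x) powr p x"
        using PW(2)[of x 0] by simp
      then show "norm (norm (g0 x) powr p x) \<le> norm (u0 x \<bullet> g0 x)" by simp
    qed
  qed
  define R where "R = (\<integral>x. norm (g0 x) powr p x \<partial>lebesgue_on \<Omega>)"
  have rho_int: "rho \<Omega> p h = ereal (\<integral>x. norm (h x) powr p x \<partial>lebesgue_on \<Omega>)"
    if "integrable (lebesgue_on \<Omega>) (\<lambda>x. norm (h x) powr p x)" for h :: "real^'d \<Rightarrow> real^'m"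
  proof -
    have "(\<integral>\<^sup>+ x. ennreal (norm (h x) powr p x) \<partial>lebesgue_on \<Omega>) = ennreal (\<integral>x. norm (h x) powr p x \<partial>lebesgue_on \<Omega>)"
      by (rule nn_integral_eq_integral[OF that]) simp
    moreover have "0 \<le> (\<integral>x. norm (h x) powr p x \<partial>lebesgue_on \<Omega>)" by (rule integral_nonneg_AE) simp
    ultimately show ?thesis unfolding rho_def by simp
  qed
  have rho_g0: "rho \<Omega> p g0 = ereal R" unfolding R_def by (rule rho_int[OF Rint])
  have LA: "ereal (inner_L2 \<Omega> u0 h) - rho \<Omega> p h \<le> ereal (inner_L2 \<Omega> u0 g0 - R)" if h: "h \<in> L2 \<Omega>" for h
  proof (cases "integrable (lebesgue_on \<Omega>) (\<lambda>x. norm (h x) powr p x)")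
    case True
    have hm[measurable]: "h \<in> borel_measurable (lebesgue_on \<Omega>)" using L2_meas[OF h] .
    have i1: "integrable (lebesgue_on \<Omega>) (\<lambda>x. u0 x \<bullet> h x)" by (rule L2_inner_int[OF u0L2 h])
    have "(\<integral>x. u0 x \<bullet> h x - norm (h x) powr p x \<partial>lebesgue_on \<Omega>)
        \<le> (\<integral>x. u0 x \<bullet> g0 x - norm (g0 x) powr p x \<partial>lebesgue_on \<Omega>)"
      by (rule integral_mono_AE) (use i1 True u0g0 Rint PW(2) in \<open>auto intro!: AE_I2\<close>)
    then have "inner_L2 \<Omega> u0 h - (\<integral>x. norm (h x) powr p x \<partial>lebesgue_on \<Omega>) \<le> inner_L2 \<Omega> u0 g0 - R"
      unfolding inner_L2_def R_def using i1 True u0g0 Rint by simp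
    then show ?thesis using rho_int[OF True] by simp
  next
    case False
    have hm[measurable]: "h \<in> borel_measurable (lebesgue_on \<Omega>)" using L2_meas[OF h] .
    have "\<not> (\<integral>\<^sup>+ x. ennreal (norm (h x) powr p x) \<partial>lebesgue_on \<Omega>) < \<infinity>"
      using integrableI_nonneg[of "\<lambda>x. norm (h x) powr p x" "lebesgue_on \<Omega>"] False by auto
    then have "rho \<Omega> p h = \<infinity>" unfolding rho_def by (simp add: less_top[symmetric])
    then show ?thesis by simp
  qed
  have conj_u0: "conj_L2 \<Omega> (rho \<Omega> p) u0 = ereal (inner_L2 \<Omega> u0 g0 - R)"
    unfolding conj_L2_def
  proof (rule antisym)
    show "(SUP h\<in>L2 \<Omega>. ereal (inner_L2 \<Omega> u0 h) - rho \<Omega> p h) \<le> ereal (inner_L2 \<Omega> u0 g0 - R)"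
      by (rule SUP_least) (rule LA)
    show "ereal (inner_L2 \<Omega> u0 g0 - R) \<le> (SUP h\<in>L2 \<Omega>. ereal (inner_L2 \<Omega> u0 h) - rho \<Omega> p h)"
      by (rule SUP_upper2[OF g0L2]) (simp add: rho_g0)
  qed
  have conj_v: "ereal (inner_L2 \<Omega> v g0 - R) \<le> conj_L2 \<Omega> (rho \<Omega> p) v" for v
    unfolding conj_L2_def by (rule SUP_upper2[OF g0L2]) (simp add: rho_g0)
  have ident: "\<tau> * (inner_L2 \<Omega> v g0 - R) + normsq_L2 \<Omega> (\<lambda>x. v x - f x) / 2
     = \<tau> * (inner_L2 \<Omega> u0 g0 - R) + normsq_L2 \<Omega> (\<lambda>x. u0 x - f x) / 2 + normsq_L2 \<Omega> (\<lambda>x. v x - u0 x) / 2"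
    if v: "v \<in> L2 \<Omega>" for v
  proof -
    have i1: "integrable (lebesgue_on \<Omega>) (\<lambda>x. v x \<bullet> g0 x)" by (rule L2_inner_int[OF v g0L2])
    have i2: "integrable (lebesgue_on \<Omega>) (\<lambda>x. (norm (v x - f x))\<^sup>2)" by (rule L2_int[OF L2_diff[OF v assms(6)]])
    have i3: "integrable (lebesgue_on \<Omega>) (\<lambda>x. (norm (u0 x - f x))\<^sup>2)" by (rule L2_int[OF L2_diff[OF u0L2 assms(6)]])
    have i4: "integrable (lebesgue_on \<Omega>) (\<lambda>x. (norm (v x - u0 x))\<^sup>2)" by (rule L2_int[OF L2_diff[OF v u0L2]])
    have "(\<integral>x. \<tau> * (v x \<bullet> g0 x) - \<tau> * (u0 x \<bullet> g0 x) + (norm (v x - f x))\<^sup>2 / 2 - (norm (u0 x - f x))\<^sup>2 / 2 \<partial>lebesgue_on \<Omega>)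
        = (\<integral>x. (norm (v x - u0 x))\<^sup>2 / 2 \<partial>lebesgue_on \<Omega>)"
      unfolding g0_def using pw_identity assms(5) by (intro Bochner_Integration.integral_cong) auto
    then show ?thesis
      unfolding inner_L2_def normsq_L2_def using i1 i2 i3 i4 u0g0
      by (simp add: algebra_simps)
  qed
  define K where "K = \<tau> * (inner_L2 \<Omega> u0 g0 - R) + normsq_L2 \<Omega> (\<lambda>x. u0 x - f x) / 2"
  have PhiU0: "ereal \<tau> * conj_L2 \<Omega> (rho \<Omega> p) u0 + ereal (normsq_L2 \<Omega> (\<lambda>x. u0 x - f x) / 2) = ereal K"
    unfolding conj_u0 K_def by simp
  have Nnn: "0 \<le> normsq_L2 \<Omega> (\<lambda>x. v x - u0 x)" for v
    unfolding normsq_L2_def by (rule integral_nonneg_AE) simp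
  have PhiV: "ereal (K + normsq_L2 \<Omega> (\<lambda>x. v x - u0 x) / 2)
      \<le> ereal \<tau> * conj_L2 \<Omega> (rho \<Omega> p) v + ereal (normsq_L2 \<Omega> (\<lambda>x. v x - f x) / 2)"
    if v: "v \<in> L2 \<Omega>" for v
  proof -
    have "ereal (K + normsq_L2 \<Omega> (\<lambda>x. v x - u0 x) / 2)
        = ereal \<tau> * ereal (inner_L2 \<Omega> v g0 - R) + ereal (normsq_L2 \<Omega> (\<lambda>x. v x - f x) / 2)"
      using ident[OF v] unfolding K_def by simp
    also have "\<dots> \<le> ereal \<tau> * conj_L2 \<Omega> (rho \<Omega> p) v + ereal (normsq_L2 \<Omega> (\<lambda>x. v x - f x) / 2)"
      by (intro add_right_mono ereal_mult_left_mono conj_v) (use assms(5) in simp)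
    finally show ?thesis .
  qed
  have u0prox: "ereal K \<le> ereal \<tau> * conj_L2 \<Omega> (rho \<Omega> p) v + ereal (normsq_L2 \<Omega> (\<lambda>x. v x - f x) / 2)"
    if v: "v \<in> L2 \<Omega>" for v
  proof -
    have "ereal K \<le> ereal (K + normsq_L2 \<Omega> (\<lambda>x. v x - u0 x) / 2)" using Nnn[of v] by simp
    then show ?thesis using PhiV[OF v] by (rule order_trans)
  qed
  have "is_prox \<Omega> (conj_L2 \<Omega> (rho \<Omega> p)) \<tau> f u \<longleftrightarrow>
              u \<in> L2 \<Omega> \<and> (AE x in lebesgue_on \<Omega>. u x = u0 x)" for u
  proof
    assume P: "is_prox \<Omega> (conj_L2 \<Omega> (rho \<Omega> p)) \<tau> f u"
    then have u: "u \<in> L2 \<Omega>" unfolding is_prox_def by simp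
    have "ereal \<tau> * conj_L2 \<Omega> (rho \<Omega> p) u + ereal (normsq_L2 \<Omega> (\<lambda>x. u x - f x) / 2) \<le> ereal K"
      using P u0L2 unfolding is_prox_def PhiU0[symmetric] by blast
    with PhiV[OF u] have "ereal (K + normsq_L2 \<Omega> (\<lambda>x. u x - u0 x) / 2) \<le> ereal K"
      by (rule order_trans)
    then have "normsq_L2 \<Omega> (\<lambda>x. u x - u0 x) = 0" using Nnn[of u] by simp
    then have "AE x in lebesgue_on \<Omega>. (norm (u x - u0 x))\<^sup>2 = 0"
      unfolding normsq_L2_def
      by (subst (asm) integral_nonneg_eq_0_iff_AE) (use L2_int[OF L2_diff[OF u u0L2]] in auto)
    then have "AE x in lebesgue_on \<Omega>. u x = u0 x" by eventually_elim simp
    with u show "u \<in> L2 \<Omega> \<and> (AE x in lebesgue_on \<Omega>. u x = u0 x)" by simp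
  next
    assume "u \<in> L2 \<Omega> \<and> (AE x in lebesgue_on \<Omega>. u x = u0 x)"
    then have u: "u \<in> L2 \<Omega>" and ae: "AE x in lebesgue_on \<Omega>. u x = u0 x" by auto
    have um[measurable]: "u \<in> borel_measurable (lebesgue_on \<Omega>)" using L2_meas[OF u] .
    have "inner_L2 \<Omega> u h = inner_L2 \<Omega> u0 h" if h: "h \<in> L2 \<Omega>" for h
    proof -
      have [measurable]: "h \<in> borel_measurable (lebesgue_on \<Omega>)" using L2_meas[OF h] .
      show ?thesis unfolding inner_L2_def
        by (rule integral_cong_AE) (use ae in \<open>auto elim: eventually_mono\<close>)
    qed
    then have cu: "conj_L2 \<Omega> (rho \<Omega> p) u = conj_L2 \<Omega> (rho \<Omega> p) u0"
      unfolding conj_L2_def by (intro SUP_cong) auto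
    have nu: "normsq_L2 \<Omega> (\<lambda>x. u x - f x) = normsq_L2 \<Omega> (\<lambda>x. u0 x - f x)"
      unfolding normsq_L2_def
      by (rule integral_cong_AE) (use ae in \<open>auto elim: eventually_mono\<close>)
    show "is_prox \<Omega> (conj_L2 \<Omega> (rho \<Omega> p)) \<tau> f u"
      unfolding is_prox_def using u u0prox PhiU0 cu nu by simp
  qed
  then show ?thesis using u0L2 unfolding u0_def by simp
qed

end
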